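(* Let $X$ be a nontrivial real Hausdorff locally convex space and let $g\in\Gamma(X)$ be sublinear. For $x^{\ast}\in X^{\ast}$ set $L_{x^{\ast}}:=\{x\in X: g(x)=\langle x,x^{\ast}\rangle \text{ and } g(-x)=-\langle x,x^{\ast}\rangle\}$. Then: (a) For every $x^{\ast}\in X^{\ast}$, $L_{x^{\ast}}$ is a closed linear subspace of $X$, $$L_{x^{\ast}}=\{x\in X: g(x)\le\langle x,x^{\ast}\rangle,\ g(-x)\le-\langle x,x^{\ast}\rangle\}=[\partial g(0)-x^{\ast}]^{\perp},$$ and $g(x+u)=g(x)+\langle u,x^{\ast}\rangle$ for all $x\in X$ and $u\in L_{x^{\ast}}$. (b) If $u^{\ast}\in\partial g(0)$, then $L_{u^{\ast}}=[\partial g(0)-\partial g(0)]^{\perp}$. Consequently, $L_{x^{\ast}}\subset L_{u^{\ast}}$ for all $x^{\ast}\in X^{\ast}$ and $u^{\ast}\in\partial g(0)$; in particular $L_{u^{\ast}}=L_{v^{\ast}}$ for all $u^{\ast},v^{\ast}\in\partial g(0)$.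
   Context: $X^{\ast}$ is the topological dual of $X$ (weak$^{\ast}$ topology), $\langle x,x^{\ast}\rangle:=x^{\ast}(x)$. $\Gamma(X)$ is the set of proper lower semicontinuous convex functions $X\to\mathbb{R}\cup\{\pm\infty\}$. $\partial g(0)=\{x^{\ast}\in X^{\ast}:\langle x',x^{\ast}\rangle\le g(x')\ \forall x'\in X\}$. For $B\subset X^{\ast}$, $B^{\perp}=\{x\in X:\langle x,x^{\ast}\rangle=0\ \forall x^{\ast}\in B\}$; $\partial g(0)-x^{\ast}$ and $\partial g(0)-\partial g(0)$ are algebraic (Minkowski) differences. *)

theory Defs
  imports "HOL-Analysis.Analysis"
begin

definition hlcs :: "'a::real_vector topology \<Rightarrow> bool" where
  "hlcs T \<longleftrightarrow> topspace T = UNIV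
    \<and> continuous_map (prod_topology T T) T (\<lambda>(x, y). x + y)
    \<and> continuous_map (prod_topology euclideanreal T) T (\<lambda>(t, x). t *\<^sub>R x)
    \<and> Hausdorff_space T
    \<and> (\<forall>U. openin T U \<and> 0 \<in> U \<longrightarrow> (\<exists>V. openin T V \<and> convex V \<and> 0 \<in> V \<and> V \<subseteq> U))"

definition tdual :: "'a::real_vector topology \<Rightarrow> ('a \<Rightarrow> real) set" where
  "tdual T = {f. linear f \<and> continuous_map T euclideanreal f}"

definition proper_fun :: "('a \<Rightarrow> ereal) \<Rightarrow> bool" where
  "proper_fun g \<longleftrightarrow> (\<forall>x. g x \<noteq> -\<infinity>) \<and> (\<exists>x. g x \<noteq> \<infinity>)"

definition lsc_fun :: "'a topology \<Rightarrow> ('a \<Rightarrow> ereal) \<Rightarrow> bool" where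
  "lsc_fun T g \<longleftrightarrow> (\<forall>c::real. closedin T {x \<in> topspace T. g x \<le> ereal c})"

definition convex_efun :: "('a::real_vector \<Rightarrow> ereal) \<Rightarrow> bool" where
  "convex_efun g \<longleftrightarrow> (\<forall>x y. \<forall>t::real. 0 \<le> t \<and> t \<le> 1 \<longrightarrow>
      g (t *\<^sub>R x + (1 - t) *\<^sub>R y) \<le> ereal t * g x + ereal (1 - t) * g y)"

definition Gamma :: "'a::real_vector topology \<Rightarrow> ('a \<Rightarrow> ereal) set" where
  "Gamma T = {g. proper_fun g \<and> lsc_fun T g \<and> convex_efun g}"

definition sublinear :: "('a::real_vector \<Rightarrow> ereal) \<Rightarrow> bool" where
  "sublinear g \<longleftrightarrow> (\<forall>x. \<forall>t::real. t > 0 \<longrightarrow> g (t *\<^sub>R x) = ereal t * g x)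
                 \<and> (\<forall>x y. g (x + y) \<le> g x + g y)"

definition subdiff0 :: "'a::real_vector topology \<Rightarrow> ('a \<Rightarrow> ereal) \<Rightarrow> ('a \<Rightarrow> real) set" where
  "subdiff0 T g = {xs \<in> tdual T. \<forall>x. ereal (xs x) \<le> g x}"

definition perp :: "('a \<Rightarrow> real) set \<Rightarrow> 'a set" where
  "perp B = {x. \<forall>b\<in>B. b x = 0}"

definition Lset :: "('a::real_vector \<Rightarrow> ereal) \<Rightarrow> ('a \<Rightarrow> real) \<Rightarrow> 'a set" where
  "Lset g xs = {x. g x = ereal (xs x) \<and> g (- x) = ereal (- xs x)}"

end

theory Submission
  imports Defs
begin


definition hbgood :: "('b::real_vector \<Rightarrow> real) \<Rightarrow> 'b \<Rightarrow> ('b \<times> real) set \<Rightarrow> bool" where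
  "hbgood p w0 G \<longleftrightarrow> (\<forall>x a b. (x,a)\<in>G \<longrightarrow> (x,b)\<in>G \<longrightarrow> a = b)
    \<and> (\<forall>x a y b. (x,a)\<in>G \<longrightarrow> (y,b)\<in>G \<longrightarrow> (x+y,a+b)\<in>G)
    \<and> (\<forall>x a c. (x,a)\<in>G \<longrightarrow> (c *\<^sub>R x, c*a) \<in> G)
    \<and> (\<forall>x a. (x,a)\<in>G \<longrightarrow> a \<le> p x)
    \<and> (w0, p w0) \<in> G"

lemma hb_ext:
  fixes p :: "'b::real_vector \<Rightarrow> real"
  assumes sub: "\<And>x y. p (x+y) \<le> p x + p y" and hom: "\<And>x t. t > 0 \<Longrightarrow> p (t *\<^sub>R x) = t * p x"
    and M: "hbgood p w0 M" and z: "\<forall>a. (z,a) \<notin> M"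
  shows "\<exists>M'. hbgood p w0 M' \<and> M \<subseteq> M' \<and> M' \<noteq> M"
proof -
  have fnc: "\<And>x a b. (x,a)\<in>M \<Longrightarrow> (x,b)\<in>M \<Longrightarrow> a = b"
   and add: "\<And>x a y b. (x,a)\<in>M \<Longrightarrow> (y,b)\<in>M \<Longrightarrow> (x+y,a+b)\<in>M"
   and scl: "\<And>x a c. (x,a)\<in>M \<Longrightarrow> (c *\<^sub>R x, c*a) \<in> M"
   and dom: "\<And>x a. (x,a)\<in>M \<Longrightarrow> a \<le> p x"
   and w0: "(w0, p w0) \<in> M" using M unfolding hbgood_def by blast+
  have zero: "(0, 0) \<in> M" using scl[OF w0, of 0] by simp
  define S where "S = {b - p (y - z) | y b. (y,b)\<in>M}"
  define c where "c = Sup S"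
  have key: "b - p (y - z) \<le> p (y' + z) - b'" if "(y,b)\<in>M" "(y',b')\<in>M" for y b y' b'
  proof -
    have "b + b' \<le> p (y + y')" using dom[OF add[OF that]] .
    also have "y + y' = (y - z) + (y' + z)" by simp
    finally show ?thesis using sub[of "y - z" "y' + z"] by linarith
  qed
  have Sne: "S \<noteq> {}" using zero unfolding S_def by blast
  have Sbdd: "bdd_above S" unfolding S_def bdd_above_def using key[OF _ zero] by fastforce
  have c1: "b - p (y - z) \<le> c" if "(y,b)\<in>M" for y b
    unfolding c_def by (rule cSup_upper[OF _ Sbdd]) (use that S_def in blast)
  have c2: "c \<le> p (y' + z) - b'" if "(y',b')\<in>M" for y' b'
    unfolding c_def by (rule cSup_least[OF Sne]) (use key that S_def in blast)
  define M' where "M' = {(x + t *\<^sub>R z, a + t * c) | x a t. (x,a)\<in>M}"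
  have inM': "(x + t *\<^sub>R z, a + t * c) \<in> M'" if "(x,a)\<in>M" for x a t
    using that unfolding M'_def by blast
  have "hbgood p w0 M'"
    unfolding hbgood_def
  proof (intro conjI allI impI)
    fix x a b assume "(x,a)\<in>M'" "(x,b)\<in>M'"
    then obtain x1 a1 t1 x2 a2 t2 where h: "(x1,a1)\<in>M" "(x2,a2)\<in>M" "x = x1 + t1 *\<^sub>R z"
      "a = a1 + t1 * c" "x = x2 + t2 *\<^sub>R z" "b = a2 + t2 * c" unfolding M'_def by blast
    show "a = b"
    proof (cases "t1 = t2")
      case True
      then have "x1 = x2" using h by simp
      then show ?thesis using fnc h True by blast
    next
      case False
      have "(x2 + (-1) *\<^sub>R x1, a2 + (-1) * a1) \<in> M" using add[OF h(2) scl[OF h(1)]] .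
      from scl[OF this, of "inverse (t1 - t2)"]
      have "(inverse (t1 - t2) *\<^sub>R (x2 + (-1) *\<^sub>R x1), inverse (t1 - t2) * (a2 + (-1) * a1)) \<in> M" .
      moreover have "inverse (t1 - t2) *\<^sub>R (x2 + (-1) *\<^sub>R x1) = z"
      proof -
        have "x2 + (-1) *\<^sub>R x1 = (t1 - t2) *\<^sub>R z" using h by (simp add: algebra_simps)
        then show ?thesis using False by simp
      qed
      ultimately show ?thesis using z by auto
    qed
  next
    fix x a y b assume "(x,a)\<in>M'" "(y,b)\<in>M'"
    then obtain x1 a1 t1 x2 a2 t2 where h: "(x1,a1)\<in>M" "(x2,a2)\<in>M" "x = x1 + t1 *\<^sub>R z"
      "a = a1 + t1 * c" "y = x2 + t2 *\<^sub>R z" "b = a2 + t2 * c" unfolding M'_def by blast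
    have "(x1 + x2 + (t1 + t2) *\<^sub>R z, a1 + a2 + (t1 + t2) * c) \<in> M'" using inM'[OF add[OF h(1,2)]] .
    then show "(x + y, a + b) \<in> M'" using h by (simp add: algebra_simps)
  next
    fix x a r assume "(x,a)\<in>M'"
    then obtain x1 a1 t1 where h: "(x1,a1)\<in>M" "x = x1 + t1 *\<^sub>R z" "a = a1 + t1 * c"
      unfolding M'_def by blast
    have "(r *\<^sub>R x1 + (r * t1) *\<^sub>R z, r * a1 + (r * t1) * c) \<in> M'" using inM'[OF scl[OF h(1)]] .
    then show "(r *\<^sub>R x, r * a) \<in> M'" using h by (simp add: algebra_simps)
  next
    fix x a assume "(x,a)\<in>M'"
    then obtain x1 a1 t where h: "(x1,a1)\<in>M" "x = x1 + t *\<^sub>R z" "a = a1 + t * c"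
      unfolding M'_def by blast
    show "a \<le> p x"
    proof (cases "t > 0")
      case True
      have "c \<le> p (inverse t *\<^sub>R x1 + z) - inverse t * a1" using c2[OF scl[OF h(1)]] .
      then have "t * c \<le> t * p (inverse t *\<^sub>R x1 + z) - a1" using True
        by (simp add: field_simps)
      also have "t * p (inverse t *\<^sub>R x1 + z) = p (t *\<^sub>R (inverse t *\<^sub>R x1 + z))" using hom True by simp
      also have "t *\<^sub>R (inverse t *\<^sub>R x1 + z) = x" using h True by (simp add: algebra_simps)
      finally show ?thesis using h by linarith
    next
      case False
      show ?thesis
      proof (cases "t = 0")
        case True then show ?thesis using h dom by simp
      next
        case False': False
        define s where "s = - t"
        have s: "s > 0" using False False' s_def by linarith
        have "inverse s * a1 - p (inverse s *\<^sub>R x1 - z) \<le> c" using c1[OF scl[OF h(1)]] .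
        then have "a1 - s * p (inverse s *\<^sub>R x1 - z) \<le> s * c" using s
          by (simp add: field_simps)
        also have "s * p (inverse s *\<^sub>R x1 - z) = p (s *\<^sub>R (inverse s *\<^sub>R x1 - z))" using hom s by simp
        also have "s *\<^sub>R (inverse s *\<^sub>R x1 - z) = x" using h s s_def by (simp add: algebra_simps)
        finally have A: "a1 - p x \<le> s * c" .
        have "t * c = - (s * c)" by (simp add: s_def)
        then show ?thesis using h A by linarith
      qed
    qed
  next
    show "(w0, p w0) \<in> M'" using inM'[OF w0, of 0] by simp
  qed
  moreover have "M \<subseteq> M'" using inM'[of _ _ 0] by auto
  moreover have "(z, c) \<in> M'" using inM'[OF zero, of 1] by simp
  ultimately show ?thesis using z by blast
qed

lemma hb_main:
  fixes p :: "'b::real_vector \<Rightarrow> real"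
  assumes sub: "\<And>x y. p (x+y) \<le> p x + p y" and hom: "\<And>x t. t > 0 \<Longrightarrow> p (t *\<^sub>R x) = t * p x"
  shows "\<exists>F. linear F \<and> (\<forall>x. F x \<le> p x) \<and> F w0 = p w0"
proof -
  have p0: "p 0 = 0" using hom[of 2 0] by simp
  define A where "A = {G. hbgood p w0 G}"
  define G0 where "G0 = {(t *\<^sub>R w0, t * p w0) | t. True}"
  have G0: "hbgood p w0 G0"
    unfolding hbgood_def
  proof (intro conjI allI impI)
    fix x a b assume "(x,a)\<in>G0" "(x,b)\<in>G0"
    then obtain t s where h: "x = t *\<^sub>R w0" "a = t * p w0" "x = s *\<^sub>R w0" "b = s * p w0"
      unfolding G0_def by blast
    show "a = b"
    proof (cases "w0 = 0")
      case True then show ?thesis using h p0 by simp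
    next
      case False
      then have "t = s" using h by (metis scaleR_cancel_right)
      then show ?thesis using h by simp
    qed
  next
    fix x a y b assume "(x,a)\<in>G0" "(y,b)\<in>G0"
    then obtain t s where h: "x = t *\<^sub>R w0" "a = t * p w0" "y = s *\<^sub>R w0" "b = s * p w0"
      unfolding G0_def by blast
    have "(x + y, a + b) = ((t+s) *\<^sub>R w0, (t+s) * p w0)" using h by (simp add: algebra_simps)
    then show "(x + y, a + b) \<in> G0" unfolding G0_def by blast
  next
    fix x a c assume "(x,a)\<in>G0"
    then obtain t where h: "x = t *\<^sub>R w0" "a = t * p w0" unfolding G0_def by blast
    have "(c *\<^sub>R x, c * a) = ((c*t) *\<^sub>R w0, (c*t) * p w0)" using h by simp
    then show "(c *\<^sub>R x, c * a) \<in> G0" unfolding G0_def by blast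
  next
    fix x a assume "(x,a)\<in>G0"
    then obtain t where h: "x = t *\<^sub>R w0" "a = t * p w0" unfolding G0_def by blast
    have ww: "0 \<le> p w0 + p (- w0)" using sub[of w0 "- w0"] p0 by simp
    show "a \<le> p x"
    proof (cases "t > 0")
      case True then show ?thesis using h hom by simp
    next
      case False
      show ?thesis
      proof (cases "t = 0")
        case True then show ?thesis using h p0 by simp
      next
        case False': False
        have "p x = p ((- t) *\<^sub>R (- w0))" using h by simp
        also have "\<dots> = (- t) * p (- w0)" using hom[of "- t" "- w0"] False False' by linarith
        finally have "p x = (- t) * p (- w0)" .
        moreover have "(- t) * p (- w0) \<ge> (- t) * (- p w0)" using ww False False'
          by (intro mult_left_mono) auto
        ultimately show ?thesis using h by simp
      qed
    qed
  next
    show "(w0, p w0) \<in> G0" unfolding G0_def by (rule CollectI, rule exI[of _ 1]) simp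
  qed
  have "\<forall>C\<in>chains A. \<exists>U\<in>A. \<forall>X\<in>C. X \<subseteq> U"
  proof
    fix C assume C: "C \<in> chains A"
    show "\<exists>U\<in>A. \<forall>X\<in>C. X \<subseteq> U"
    proof (cases "C = {}")
      case True then show ?thesis using G0 A_def by blast
    next
      case False
      have CA: "C \<subseteq> A" and ch: "\<And>X Y. X \<in> C \<Longrightarrow> Y \<in> C \<Longrightarrow> X \<subseteq> Y \<or> Y \<subseteq> X"
        using C unfolding chains_def chain_subset_def by auto
      have gd: "\<And>X. X \<in> C \<Longrightarrow> hbgood p w0 X" using CA A_def by auto
      have two: "\<exists>X\<in>C. u \<in> X \<and> v \<in> X" if uv: "u \<in> \<Union>C" "v \<in> \<Union>C" for u v
      proof -
        obtain X Y where "X \<in> C" "Y \<in> C" "u \<in> X" "v \<in> Y" using uv by blast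
        then show ?thesis using ch[of X Y] by blast
      qed
      have "hbgood p w0 (\<Union>C)"
        unfolding hbgood_def
      proof (intro conjI allI impI)
        fix x a b assume "(x,a)\<in>\<Union>C" "(x,b)\<in>\<Union>C"
        then obtain X where "X \<in> C" "(x,a)\<in>X" "(x,b)\<in>X" using two by blast
        then show "a = b" using gd unfolding hbgood_def by blast
      next
        fix x a y b assume "(x,a)\<in>\<Union>C" "(y,b)\<in>\<Union>C"
        then obtain X where "X \<in> C" "(x,a)\<in>X" "(y,b)\<in>X" using two by blast
        then show "(x+y,a+b) \<in> \<Union>C" using gd unfolding hbgood_def by blast
      next
        fix x a c assume "(x,a)\<in>\<Union>C"
        then obtain X where "X \<in> C" "(x,a)\<in>X" by blast
        then show "(c *\<^sub>R x, c*a) \<in> \<Union>C" using gd unfolding hbgood_def by blast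
      next
        fix x a assume "(x,a)\<in>\<Union>C"
        then obtain X where "X \<in> C" "(x,a)\<in>X" by blast
        then show "a \<le> p x" using gd unfolding hbgood_def by blast
      next
        obtain X where "X \<in> C" using False by blast
        then show "(w0, p w0) \<in> \<Union>C" using gd unfolding hbgood_def by blast
      qed
      then show ?thesis using A_def by blast
    qed
  qed
  from Zorn_Lemma2[OF this] obtain M where M: "M \<in> A" and max: "\<And>X. X \<in> A \<Longrightarrow> M \<subseteq> X \<Longrightarrow> X = M"
    by blast
  have gM: "hbgood p w0 M" using M A_def by simp
  have tot: "\<exists>a. (x,a) \<in> M" for x
  proof (rule ccontr)
    assume "\<nexists>a. (x, a) \<in> M"
    then obtain M' where "hbgood p w0 M'" "M \<subseteq> M'" "M' \<noteq> M"
      using hb_ext[OF sub hom gM] by blast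
    then show False using max A_def by blast
  qed
  have fnc: "\<And>x a b. (x,a)\<in>M \<Longrightarrow> (x,b)\<in>M \<Longrightarrow> a = b"
   and add: "\<And>x a y b. (x,a)\<in>M \<Longrightarrow> (y,b)\<in>M \<Longrightarrow> (x+y,a+b)\<in>M"
   and scl: "\<And>x a c. (x,a)\<in>M \<Longrightarrow> (c *\<^sub>R x, c*a) \<in> M"
   and dom: "\<And>x a. (x,a)\<in>M \<Longrightarrow> a \<le> p x"
   and w0: "(w0, p w0) \<in> M" using gM unfolding hbgood_def by blast+
  define F where "F x = (THE a. (x,a) \<in> M)" for x
  have FM: "(x, F x) \<in> M" for x
    unfolding F_def by (rule theI') (use tot fnc in blast)
  have Feq: "(x, a) \<in> M \<Longrightarrow> F x = a" for x a using FM fnc by blast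
  have "linear F"
  proof (rule linearI)
    fix x y show "F (x + y) = F x + F y" using Feq[OF add[OF FM FM]] .
  next
    fix r x show "F (r *\<^sub>R x) = r *\<^sub>R F x" using Feq[OF scl[OF FM]] by simp
  qed
  moreover have "\<forall>x. F x \<le> p x" using dom FM by blast
  moreover have "F w0 = p w0" using Feq[OF w0] .
  ultimately show ?thesis by blast
qed

lemma star_convex:
  assumes "convex K" "0 \<in> K" "k \<in> K" "0 \<le> s" "s \<le> 1"
  shows "s *\<^sub>R k \<in> K"
  using convexD[OF assms(1) assms(3) assms(2), of s "1 - s"] assms(4,5) by simp

lemma mink_sep:
  fixes K :: "'b::real_vector set"
  assumes cK: "convex K" and K0: "0 \<in> K" and abs: "\<And>w. \<exists>e>0. e *\<^sub>R w \<in> K" and w0: "w0 \<notin> K"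
  shows "\<exists>F::'b \<Rightarrow> real. linear F \<and> (\<forall>k\<in>K. F k \<le> 1) \<and> F w0 \<ge> 1"
proof -
  define P where "P w = {l. 0 < l \<and> inverse l *\<^sub>R w \<in> K}" for w
  define p where "p w = Inf (P w)" for w
  have Pne: "P w \<noteq> {}" for w
  proof -
    obtain e where "e > 0" "e *\<^sub>R w \<in> K" using abs by blast
    then have "inverse e \<in> P w" unfolding P_def by simp
    then show ?thesis by blast
  qed
  have Pbdd: "bdd_below (P w)" for w unfolding P_def bdd_below_def by (rule exI[of _ 0]) auto
  have Pup: "m \<in> P w" if "l \<in> P w" "l \<le> m" for l m w
  proof -
    have l: "0 < l" "inverse l *\<^sub>R w \<in> K" using that(1) P_def by auto
    have "0 \<le> l / m" "l / m \<le> 1" using l(1) that(2) by auto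
    then have "(l / m) *\<^sub>R (inverse l *\<^sub>R w) \<in> K"
      using star_convex[OF cK K0 l(2)] by blast
    moreover have "(l / m) *\<^sub>R (inverse l *\<^sub>R w) = inverse m *\<^sub>R w" using l(1) that(2)
      by (simp add: field_simps)
    ultimately have "inverse m *\<^sub>R w \<in> K" by metis
    moreover have "0 < m" using l(1) that(2) by simp
    ultimately show ?thesis unfolding P_def by blast
  qed
  have pge0: "0 \<le> p w" for w unfolding p_def by (rule cInf_greatest[OF Pne]) (auto simp: P_def)
  have plow: "p w \<le> l" if "l \<in> P w" for l w unfolding p_def by (rule cInf_lower[OF that Pbdd])
  have papprox: "\<exists>l\<in>P w. l < p w + e" if "e > 0" for w e
  proof -
    have "Inf (P w) < p w + e" using that p_def by simp
    then show ?thesis using cInf_lessD[OF Pne] by blast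
  qed
  have sub: "p (x + y) \<le> p x + p y" for x y
  proof (rule field_le_epsilon)
    fix e :: real assume e: "e > 0"
    obtain l where l: "l \<in> P x" "l < p x + e/2" using papprox[of "e/2"] e by auto
    obtain m where m: "m \<in> P y" "m < p y + e/2" using papprox[of "e/2"] e by auto
    have l': "0 < l" "inverse l *\<^sub>R x \<in> K" and m': "0 < m" "inverse m *\<^sub>R y \<in> K"
      using l(1) m(1) P_def by auto
    have "(l / (l+m)) *\<^sub>R (inverse l *\<^sub>R x) + (m / (l+m)) *\<^sub>R (inverse m *\<^sub>R y) \<in> K"
      using convexD[OF cK l'(2) m'(2), of "l/(l+m)" "m/(l+m)"] l'(1) m'(1)
      by (simp add: add_divide_distrib[symmetric])
    moreover have "(l / (l+m)) *\<^sub>R (inverse l *\<^sub>R x) + (m / (l+m)) *\<^sub>R (inverse m *\<^sub>R y)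
        = inverse (l+m) *\<^sub>R (x + y)" using l'(1) m'(1) by (simp add: field_simps scaleR_add_right)
    ultimately have "l + m \<in> P (x + y)" unfolding P_def using l'(1) m'(1) by simp
    then have "p (x + y) \<le> l + m" by (rule plow)
    then show "p (x + y) \<le> p x + p y + e" using l(2) m(2) by linarith
  qed
  have homle: "p (t *\<^sub>R x) \<le> t * p x" if t: "t > 0" for t x
  proof (rule field_le_epsilon)
    fix e :: real assume e: "e > 0"
    obtain l where l: "l \<in> P x" "l < p x + e/t" using papprox[of "e/t"] e t by auto
    have l': "0 < l" "inverse l *\<^sub>R x \<in> K" using l(1) P_def by auto
    have eq: "inverse (t * l) *\<^sub>R (t *\<^sub>R x) = inverse l *\<^sub>R x" using t by simp
    have "0 < t * l" using l' t by simp
    then have "t * l \<in> P (t *\<^sub>R x)" unfolding P_def mem_Collect_eq eq using l' by blast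
    then have "p (t *\<^sub>R x) \<le> t * l" by (rule plow)
    also have "t * l \<le> t * (p x + e / t)" using l(2) t by simp
    also have "\<dots> = t * p x + e" using t by (simp add: field_simps)
    finally show "p (t *\<^sub>R x) \<le> t * p x + e" .
  qed
  have hom: "p (t *\<^sub>R x) = t * p x" if t: "t > 0" for t x
  proof -
    have "p x = p (inverse t *\<^sub>R (t *\<^sub>R x))" using t by simp
    also have "\<dots> \<le> inverse t * p (t *\<^sub>R x)" using homle[of "inverse t" "t *\<^sub>R x"] t by simp
    finally have "t * p x \<le> p (t *\<^sub>R x)" using t by (simp add: field_simps)
    then show ?thesis using homle[OF t, of x] by simp
  qed
  obtain F where F: "linear F" "\<And>x. F x \<le> p x" "F w0 = p w0" using hb_main[OF sub hom] by blast
  have "F k \<le> 1" if "k \<in> K" for k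
  proof -
    have "1 \<in> P k" using that P_def by simp
    then show ?thesis using plow[of 1 k] F(2)[of k] by simp
  qed
  moreover have "F w0 \<ge> 1"
  proof (rule ccontr)
    assume "\<not> 1 \<le> F w0"
    then have "p w0 < 1" using F(3) by simp
    then obtain l where "l \<in> P w0" "l < 1" using papprox[of "1 - p w0" w0] by auto
    then have "1 \<in> P w0" using Pup by simp
    then show False using w0 P_def by simp
  qed
  ultimately show ?thesis using F(1) by (intro exI[of _ F]) blast
qed



lemma sep_lemma:
  fixes g :: "'a::real_vector \<Rightarrow> ereal" and V :: "'a set"
  assumes g0: "g 0 = 0" and cg: "convex_efun g" and sl: "sublinear g"
    and cV: "convex V" and V0: "0 \<in> V" and absV: "\<And>y. \<exists>e>0. e *\<^sub>R y \<in> V"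
    and dl: "\<delta> > 0" and big: "\<And>v. v \<in> V \<Longrightarrow> ereal (r + \<delta>) < g (x0 + v)"
  shows "\<exists>\<phi> \<alpha>. linear \<phi> \<and> \<alpha> \<le> (0::real) \<and> (\<forall>x t. g x \<le> ereal t \<longrightarrow> \<phi> x + \<alpha> * t \<le> 0)
     \<and> (\<forall>v\<in>V. \<phi> v \<ge> -1) \<and> \<phi> x0 + \<alpha> * r > 0"
proof -
  define E where "E = {(x, t). g x \<le> ereal t}"
  define D where "D = {(- v, \<sigma>) | v \<sigma>. v \<in> V \<and> \<bar>\<sigma>\<bar> < \<delta>}"
  define K where "K = (\<Union>e\<in>E. \<Union>d\<in>D. {e + d})"
  have hom: "\<And>x t. t > 0 \<Longrightarrow> g (t *\<^sub>R x) = ereal t * g x" using sl unfolding sublinear_def by blast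
  have cE: "convex E"
    unfolding convex_def
  proof (intro ballI allI impI)
    fix e1 e2 and u v :: real assume h: "e1 \<in> E" "e2 \<in> E" "0 \<le> u" "0 \<le> v" "u + v = 1"
    obtain x a y b where e: "e1 = (x, a)" "e2 = (y, b)" "g x \<le> ereal a" "g y \<le> ereal b"
      using h(1,2) unfolding E_def by auto
    have "g (u *\<^sub>R x + (1 - u) *\<^sub>R y) \<le> ereal u * g x + ereal (1 - u) * g y"
      using cg h unfolding convex_efun_def by auto
    also have "\<dots> \<le> ereal u * ereal a + ereal (1 - u) * ereal b"
      using h e by (intro add_mono ereal_mult_left_mono) auto
    finally have "g (u *\<^sub>R x + (1 - u) *\<^sub>R y) \<le> ereal (u * a + (1 - u) * b)" by simp
    moreover have "v = 1 - u" using h(5) by simp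
    ultimately have "g (u *\<^sub>R x + v *\<^sub>R y) \<le> ereal (u * a + v * b)" by simp
    then show "u *\<^sub>R e1 + v *\<^sub>R e2 \<in> E" unfolding E_def e by simp
  qed
  have cD: "convex D"
    unfolding convex_def
  proof (intro ballI allI impI)
    fix e1 e2 and u v :: real assume h: "e1 \<in> D" "e2 \<in> D" "0 \<le> u" "0 \<le> v" "u + v = 1"
    obtain x a y b where e: "e1 = (- x, a)" "e2 = (- y, b)" "x \<in> V" "y \<in> V" "\<bar>a\<bar> < \<delta>" "\<bar>b\<bar> < \<delta>"
      using h(1,2) unfolding D_def by auto
    have "u *\<^sub>R x + v *\<^sub>R y \<in> V" using convexD[OF cV e(3,4)] h by auto
    moreover have "\<bar>u * a + v * b\<bar> < \<delta>"
    proof -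
      have "\<bar>u * a + v * b\<bar> \<le> u * \<bar>a\<bar> + v * \<bar>b\<bar>" using h(3,4)
        by (metis abs_mult abs_of_nonneg abs_triangle_ineq)
      also have "\<dots> < \<delta>"
      proof (cases "u = 0")
        case True then show ?thesis using h e by simp
      next
        case False
        have "u * \<bar>a\<bar> < u * \<delta>" using False h(3) e(5) by simp
        moreover have "v * \<bar>b\<bar> \<le> v * \<delta>" using h(4) e(6) by (simp add: mult_left_mono)
        ultimately show ?thesis using h(5) by (metis add_less_le_mono distrib_right mult_1)
      qed
      finally show ?thesis .
    qed
    ultimately have "(- (u *\<^sub>R x + v *\<^sub>R y), u * a + v * b) \<in> D" unfolding D_def by blast
    then show "u *\<^sub>R e1 + v *\<^sub>R e2 \<in> D" using e by (simp add: algebra_simps)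
  qed
  have cK: "convex K" unfolding K_def by (rule convex_sums[OF cE cD])
  have E0: "(0, 0) \<in> E" using g0 unfolding E_def by simp
  have D0: "(0, 0) \<in> D" using V0 dl unfolding D_def by force
  have Kmem: "e \<in> E \<Longrightarrow> d \<in> D \<Longrightarrow> e + d \<in> K" for e d unfolding K_def by blast
  have K0: "0 \<in> K" using Kmem[OF E0 D0] by (simp add: zero_prod_def)
  have EK: "e \<in> E \<Longrightarrow> e \<in> K" for e using Kmem[OF _ D0, of e] by (simp add: zero_prod_def[symmetric])
  have DK: "d \<in> D \<Longrightarrow> d \<in> K" for d using Kmem[OF E0, of d] by (simp add: zero_prod_def[symmetric])
  have absK: "\<exists>e>0. e *\<^sub>R w \<in> K" for w
  proof -
    obtain y \<tau> where w: "w = (y, \<tau>)" using prod.exhaust by blast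
    obtain e1 where e1: "e1 > 0" "e1 *\<^sub>R (- y) \<in> V" using absV by blast
    define \<epsilon> where "\<epsilon> = min e1 (\<delta> / (\<bar>\<tau>\<bar> + 1))"
    have \<epsilon>: "\<epsilon> > 0" using e1 dl \<epsilon>_def by simp
    have "0 \<le> \<epsilon> / e1" "\<epsilon> / e1 \<le> 1" using \<epsilon> e1 \<epsilon>_def by auto
    then have "(\<epsilon> / e1) *\<^sub>R (e1 *\<^sub>R (- y)) \<in> V"
      using star_convex[OF cV V0 e1(2)] by blast
    then have v: "\<epsilon> *\<^sub>R (- y) \<in> V" using e1 by simp
    have "\<bar>\<epsilon> * \<tau>\<bar> < \<delta>"
    proof -
      have "\<bar>\<epsilon> * \<tau>\<bar> = \<epsilon> * \<bar>\<tau>\<bar>" using \<epsilon> by (simp add: abs_mult)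
      also have "\<dots> \<le> (\<delta> / (\<bar>\<tau>\<bar> + 1)) * \<bar>\<tau>\<bar>" using \<epsilon>_def by (intro mult_right_mono) auto
      also have "\<dots> < \<delta>" using dl by (simp add: field_simps)
      finally show ?thesis .
    qed
    then have "(- (\<epsilon> *\<^sub>R (- y)), \<epsilon> * \<tau>) \<in> D" using v unfolding D_def by blast
    then have "\<epsilon> *\<^sub>R w \<in> D" using w by simp
    then show ?thesis using \<epsilon> DK by blast
  qed
  have w0K: "(x0, r) \<notin> K"
  proof
    assume "(x0, r) \<in> K"
    then obtain x t v \<sigma> where h: "g x \<le> ereal t" "v \<in> V" "\<bar>\<sigma>\<bar> < \<delta>" "(x0, r) = (x, t) + (- v, \<sigma>)"
      unfolding K_def E_def D_def by auto
    have "x = x0 + v" "t = r - \<sigma>" using h(4) by (auto simp: algebra_simps)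
    then have "ereal (r + \<delta>) < ereal (r - \<sigma>)" using big[OF h(2)] h(1) by (metis less_le_trans)
    then show False using h(3) by simp
  qed
  obtain \<Phi> :: "'a \<times> real \<Rightarrow> real" where \<Phi>: "linear \<Phi>" "\<And>k. k \<in> K \<Longrightarrow> \<Phi> k \<le> 1" "\<Phi> (x0, r) \<ge> 1"
    using mink_sep[OF cK K0 absK w0K] by blast
  have Padd: "\<Phi> (a + b) = \<Phi> a + \<Phi> b" and Pscl: "\<Phi> (c *\<^sub>R a) = c * \<Phi> a" for a b c
    using \<Phi>(1) by (simp_all add: linear_add linear_scale)
  define \<phi> where "\<phi> x = \<Phi> (x, 0)" for x
  define \<alpha> where "\<alpha> = \<Phi> (0, 1)"
  have split: "\<Phi> (x, t) = \<phi> x + \<alpha> * t" for x t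
  proof -
    have "(x, t) = (x, 0) + t *\<^sub>R (0, 1)" by simp
    then have "\<Phi> (x, t) = \<Phi> (x, 0) + \<Phi> (t *\<^sub>R (0, 1))" using Padd by metis
    also have "\<Phi> (t *\<^sub>R (0, 1)) = t * \<Phi> (0, 1)" by (rule Pscl)
    finally show ?thesis unfolding \<phi>_def \<alpha>_def by simp
  qed
  have lin: "linear \<phi>"
  proof (rule linearI)
    fix a b show "\<phi> (a + b) = \<phi> a + \<phi> b" unfolding \<phi>_def using Padd[of "(a,0)" "(b,0)"] by simp
  next
    fix c a show "\<phi> (c *\<^sub>R a) = c *\<^sub>R \<phi> a" unfolding \<phi>_def using Pscl[of c "(a,0)"] by simp
  qed
  have Econe: "(s *\<^sub>R x, s * t) \<in> E" if "(x, t) \<in> E" "s > 0" for x t s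
  proof -
    have "g (s *\<^sub>R x) = ereal s * g x" using hom that(2) by simp
    also have "\<dots> \<le> ereal s * ereal t" using that unfolding E_def by (intro ereal_mult_left_mono) auto
    finally show ?thesis unfolding E_def by simp
  qed
  have Ele0: "\<Phi> e \<le> 0" if "e \<in> E" for e
  proof (rule ccontr)
    assume "\<not> \<Phi> e \<le> 0"
    then have pos: "\<Phi> e > 0" by simp
    obtain x t where e: "e = (x, t)" using prod.exhaust by blast
    have "(2 / \<Phi> e) *\<^sub>R e \<in> E" using Econe[of x t "2 / \<Phi> e"] that e pos by simp
    then have "\<Phi> ((2 / \<Phi> e) *\<^sub>R e) \<le> 1" using \<Phi>(2) EK by blast
    then show False using pos Pscl by simp
  qed
  have A1: "\<forall>x t. g x \<le> ereal t \<longrightarrow> \<phi> x + \<alpha> * t \<le> 0"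
  proof (intro allI impI)
    fix x t assume "g x \<le> ereal t"
    then have "(x, t) \<in> E" unfolding E_def by simp
    then show "\<phi> x + \<alpha> * t \<le> 0" using Ele0 split by metis
  qed
  have A2: "\<alpha> \<le> 0" using Ele0[of "(0,1)"] g0 unfolding \<alpha>_def E_def by simp
  have A3: "\<forall>v\<in>V. \<phi> v \<ge> -1"
  proof
    fix v assume "v \<in> V"
    then have "(- v, 0) \<in> D" using dl unfolding D_def by force
    then have "\<Phi> (- v, 0) \<le> 1" using \<Phi>(2) DK by blast
    moreover have "\<Phi> (- v, 0) = - \<phi> v" unfolding \<phi>_def using Pscl[of "-1" "(v, 0)"] by simp
    ultimately show "\<phi> v \<ge> -1" by simp
  qed
  have A4: "\<phi> x0 + \<alpha> * r > 0" using \<Phi>(3) split by simp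
  show ?thesis using lin A1 A2 A3 A4 by blast
qed



lemma hlcs_top: "hlcs T \<Longrightarrow> topspace T = UNIV" unfolding hlcs_def by blast

lemma hlcs_add: assumes "hlcs T" shows "continuous_map T T (\<lambda>y. y + a)"
proof -
  have p: "continuous_map T (prod_topology T T) (\<lambda>y. (y, a))"
    using hlcs_top[OF assms] by (intro continuous_map_pairedI) auto
  have "continuous_map (prod_topology T T) T (\<lambda>(x, y). x + y)" using assms unfolding hlcs_def by blast
  from continuous_map_compose[OF p this] show ?thesis by (simp add: o_def)
qed

lemma hlcs_scale: assumes "hlcs T" shows "continuous_map T T (\<lambda>y. c *\<^sub>R y)"
proof -
  have p: "continuous_map T (prod_topology euclideanreal T) (\<lambda>y. (c, y))"
    by (intro continuous_map_pairedI) auto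
  have "continuous_map (prod_topology euclideanreal T) T (\<lambda>(t, x). t *\<^sub>R x)" using assms unfolding hlcs_def by blast
  from continuous_map_compose[OF p this] show ?thesis by (simp add: o_def)
qed

lemma hlcs_scale_pt: assumes "hlcs T" shows "continuous_map euclideanreal T (\<lambda>t. t *\<^sub>R y)"
proof -
  have p: "continuous_map euclideanreal (prod_topology euclideanreal T) (\<lambda>t. (t, y))"
    using hlcs_top[OF assms] by (intro continuous_map_pairedI) auto
  have "continuous_map (prod_topology euclideanreal T) T (\<lambda>(t, x). t *\<^sub>R x)" using assms unfolding hlcs_def by blast
  from continuous_map_compose[OF p this] show ?thesis by (simp add: o_def)
qed

lemma hlcs_open_pre: assumes "hlcs T" "openin T U"
  shows "openin T {y. inverse c *\<^sub>R (y - a) \<in> U}"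
proof -
  have "continuous_map T T ((\<lambda>y. inverse c *\<^sub>R y) \<circ> (\<lambda>y. y + (- a)))"
    using continuous_map_compose[OF hlcs_add[OF assms(1)] hlcs_scale[OF assms(1)]] .
  from openin_continuous_map_preimage[OF this assms(2)] show ?thesis
    using hlcs_top[OF assms(1)] by (simp add: o_def)
qed

lemma hlcs_absorb: assumes "hlcs T" "openin T V" "0 \<in> V" shows "\<exists>e>0. e *\<^sub>R y \<in> V"
proof -
  have "openin euclideanreal {t \<in> topspace euclideanreal. t *\<^sub>R y \<in> V}"
    by (rule openin_continuous_map_preimage[OF hlcs_scale_pt[OF assms(1)] assms(2)])
  then have "open {t. t *\<^sub>R y \<in> V}" by simp
  moreover have "0 \<in> {t. t *\<^sub>R y \<in> V}" using assms(3) by simp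
  ultimately obtain e where e: "e > 0" "ball 0 e \<subseteq> {t. t *\<^sub>R y \<in> V}" using open_contains_ball by blast
  have "e/2 \<in> ball 0 e" using e by (simp add: dist_real_def)
  then have "(e/2) *\<^sub>R y \<in> V" using e(2) by blast
  moreover have "e/2 > 0" using e by simp
  ultimately show ?thesis by blast
qed

lemma hlcs_cont:
  fixes \<phi> :: "'a::real_vector \<Rightarrow> real"
  assumes T: "hlcs T" and lin: "linear \<phi>" and V: "openin T V" "0 \<in> V" and b: "\<And>v. v \<in> V \<Longrightarrow> \<phi> v \<ge> -1"
  shows "continuous_map T euclideanreal \<phi>"
proof -
  have Padd: "\<phi> (a + b) = \<phi> a + \<phi> b" and Pscl: "\<phi> (c *\<^sub>R a) = c * \<phi> a" for a b c
    using lin by (simp_all add: linear_add linear_scale)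
  have up: "openin T {x. \<phi> x > a}" for a
  proof (subst openin_subopen, intro ballI)
    fix x assume "x \<in> {x. \<phi> x > a}"
    then have x: "\<phi> x > a" by simp
    define c where "c = (\<phi> x - a) / 2"
    have c: "c > 0" using x c_def by simp
    define N where "N = {y. inverse c *\<^sub>R (y - x) \<in> V}"
    have "openin T N" unfolding N_def by (rule hlcs_open_pre[OF T V(1)])
    moreover have "x \<in> N" using V(2) N_def by simp
    moreover have "N \<subseteq> {x. \<phi> x > a}"
    proof
      fix y assume "y \<in> N"
      then have "\<phi> (inverse c *\<^sub>R (y - x)) \<ge> -1" using b N_def by simp
      then have "inverse c * (\<phi> y - \<phi> x) \<ge> -1" using Pscl Padd[of "y" "- x"] Pscl[of "-1" x] by simp
      then have "\<phi> y - \<phi> x \<ge> - c" using c by (simp add: field_simps)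
      moreover have "\<phi> x - c > a" using c_def x by (simp add: field_simps)
      ultimately show "y \<in> {x. \<phi> x > a}" by simp
    qed
    ultimately show "\<exists>N. openin T N \<and> x \<in> N \<and> N \<subseteq> {x. a < \<phi> x}" by blast
  qed
  have low: "openin T {x. \<phi> x < a}" for a
  proof -
    have "openin T {x \<in> topspace T. (-1) *\<^sub>R x \<in> {x. \<phi> x > - a}}"
      by (rule openin_continuous_map_preimage[OF hlcs_scale[OF T] up])
    moreover have "{x \<in> topspace T. (-1) *\<^sub>R x \<in> {x. \<phi> x > - a}} = {x. \<phi> x < a}"
      using hlcs_top[OF T] Pscl[of "-1"] by auto
    ultimately show ?thesis by simp
  qed
  show ?thesis unfolding continuous_map_upper_lower_semicontinuous_lt
    using up low hlcs_top[OF T] by simp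
qed

lemma hlcs_lsc_nbhd:
  fixes g :: "'a::real_vector \<Rightarrow> ereal"
  assumes T: "hlcs T" and l: "lsc_fun T g" and r: "ereal r < g x0"
  shows "\<exists>V. openin T V \<and> convex V \<and> 0 \<in> V \<and> (\<forall>v\<in>V. ereal r < g (x0 + v))"
proof -
  have "closedin T {x \<in> topspace T. g x \<le> ereal r}" using l unfolding lsc_fun_def by blast
  then have "openin T (topspace T - {x \<in> topspace T. g x \<le> ereal r})" by (rule openin_diff[OF openin_topspace])
  then have U: "openin T {x. ereal r < g x}" using hlcs_top[OF T] by (simp add: not_le set_diff_eq)
  have "openin T {v \<in> topspace T. v + x0 \<in> {x. ereal r < g x}}"
    by (rule openin_continuous_map_preimage[OF hlcs_add[OF T] U])
  then have U': "openin T {v. ereal r < g (x0 + v)}" using hlcs_top[OF T] by (simp add: add.commute)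
  moreover have "0 \<in> {v. ereal r < g (x0 + v)}" using r by simp
  ultimately obtain V where "openin T V" "convex V" "0 \<in> V" "V \<subseteq> {v. ereal r < g (x0 + v)}"
    using T unfolding hlcs_def by blast
  then show ?thesis by blast
qed

lemma g_zero:
  fixes g :: "'a::real_vector \<Rightarrow> ereal"
  assumes T: "hlcs T" and G: "g \<in> Gamma T" and sl: "sublinear g"
  shows "g 0 = 0"
proof -
  have hom: "\<And>x t. t > 0 \<Longrightarrow> g (t *\<^sub>R x) = ereal t * g x" using sl unfolding sublinear_def by blast
  have pr: "proper_fun g" and l: "lsc_fun T g" using G unfolding Gamma_def by auto
  have "g 0 = ereal 2 * g 0" using hom[of 2 0] by simp
  moreover have "g 0 \<noteq> -\<infinity>" using pr unfolding proper_fun_def by blast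
  ultimately have c: "g 0 = 0 \<or> g 0 = \<infinity>"
    by (cases "g 0") auto
  have "g 0 \<noteq> \<infinity>"
  proof
    assume inf: "g 0 = \<infinity>"
    obtain x1 where "g x1 \<noteq> \<infinity>" using pr unfolding proper_fun_def by blast
    moreover have "g x1 \<noteq> -\<infinity>" using pr unfolding proper_fun_def by blast
    ultimately obtain a where a: "g x1 = ereal a" by (cases "g x1") auto
    have "closedin T {x \<in> topspace T. g x \<le> ereal \<bar>a\<bar>}" using l unfolding lsc_fun_def by blast
    then have "closedin euclideanreal {t \<in> topspace euclideanreal. t *\<^sub>R x1 \<in> {x \<in> topspace T. g x \<le> ereal \<bar>a\<bar>}}"
      by (rule closedin_continuous_map_preimage[OF hlcs_scale_pt[OF T]])
    then have cl: "closed {t. g (t *\<^sub>R x1) \<le> ereal \<bar>a\<bar>}" using hlcs_top[OF T] by simp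
    have sub: "{0<..1} \<subseteq> {t. g (t *\<^sub>R x1) \<le> ereal \<bar>a\<bar>}"
    proof
      fix t :: real assume t: "t \<in> {0<..1}"
      have "g (t *\<^sub>R x1) = ereal (t * a)" using hom[of t x1] t a by simp
      have "t * a \<le> t * \<bar>a\<bar>" using t by (intro mult_left_mono) auto
      also have "t * \<bar>a\<bar> \<le> \<bar>a\<bar>" using t by (intro mult_left_le_one_le) auto
      finally have "t * a \<le> \<bar>a\<bar>" .
      with \<open>g (t *\<^sub>R x1) = ereal (t * a)\<close> show "t \<in> {t. g (t *\<^sub>R x1) \<le> ereal \<bar>a\<bar>}" by simp
    qed
    have "closure {0<..(1::real)} \<subseteq> {t. g (t *\<^sub>R x1) \<le> ereal \<bar>a\<bar>}"
      using closure_minimal[OF sub cl] .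
    moreover have "(0::real) \<in> closure {0<..(1::real)}" by simp
    ultimately have "(0::real) \<in> {t. g (t *\<^sub>R x1) \<le> ereal \<bar>a\<bar>}" by blast
    then show False using inf by simp
  qed
  then show ?thesis using c by blast
qed



lemma mk_sub:
  assumes "linear \<psi>" "continuous_map T euclideanreal \<psi>" "\<And>x t. g x = ereal t \<Longrightarrow> \<psi> x \<le> t"
    and "proper_fun g"
  shows "\<psi> \<in> subdiff0 T g"
proof -
  have "ereal (\<psi> x) \<le> g x" for x
  proof (cases "g x")
    case (real t) then show ?thesis using assms(3) by simp
  next
    case PInf then show ?thesis by simp
  next
    case MInf then show ?thesis using assms(4) unfolding proper_fun_def by blast
  qed
  then show ?thesis using assms(1,2) unfolding subdiff0_def tdual_def by blast
qed

lemma sup_rep: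
  fixes g :: "'a::real_vector \<Rightarrow> ereal"
  assumes T: "hlcs T" and G: "g \<in> Gamma T" and sl: "sublinear g" and r: "ereal r < g x0"
  shows "\<exists>u\<in>subdiff0 T g. u x0 > r"
proof -
  have g0: "g 0 = 0" by (rule g_zero[OF T G sl])
  have cg: "convex_efun g" and l: "lsc_fun T g" and pr: "proper_fun g" using G unfolding Gamma_def by auto
  have step: "\<exists>\<phi> \<alpha>. linear \<phi> \<and> continuous_map T euclideanreal \<phi> \<and> \<alpha> \<le> (0::real)
      \<and> (\<forall>x t. g x \<le> ereal t \<longrightarrow> \<phi> x + \<alpha> * t \<le> 0) \<and> \<phi> x1 + \<alpha> * r1 > 0"
    if r1: "ereal r1 < g x1" for x1 r1
  proof -
    obtain r' where r': "ereal r1 < ereal r'" "ereal r' < g x1" using ereal_dense2[OF r1] by blast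
    define \<delta> where "\<delta> = r' - r1"
    have dl: "\<delta> > 0" using r' \<delta>_def by simp
    obtain V where V: "openin T V" "convex V" "0 \<in> V" "\<And>v. v \<in> V \<Longrightarrow> ereal r' < g (x1 + v)"
      using hlcs_lsc_nbhd[OF T l r'(2)] by blast
    have absV: "\<exists>e>0. e *\<^sub>R y \<in> V" for y using hlcs_absorb[OF T V(1,3)] .
    have big: "ereal (r1 + \<delta>) < g (x1 + v)" if "v \<in> V" for v using V(4)[OF that] \<delta>_def by simp
    obtain \<phi> \<alpha> where s: "linear \<phi>" "\<alpha> \<le> (0::real)" "\<forall>x t. g x \<le> ereal t \<longrightarrow> \<phi> x + \<alpha> * t \<le> 0"
      "\<forall>v\<in>V. \<phi> v \<ge> -1" "\<phi> x1 + \<alpha> * r1 > 0"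
      using sep_lemma[OF g0 cg sl V(2,3) absV dl big] by blast
    have "continuous_map T euclideanreal \<phi>" using hlcs_cont[OF T s(1) V(1,3)] s(4) by blast
    then show ?thesis using s by blast
  qed
  obtain \<phi>0 \<alpha>0 where s0: "linear \<phi>0" "continuous_map T euclideanreal \<phi>0" "\<alpha>0 \<le> 0"
      "\<forall>x t. g x \<le> ereal t \<longrightarrow> \<phi>0 x + \<alpha>0 * t \<le> 0" "\<phi>0 0 + \<alpha>0 * (-1) > 0"
    using step[of "-1" 0] g0 by auto
  have a0: "\<alpha>0 < 0" using s0(5) linear_0[OF s0(1)] by simp
  have scaled: "(\<lambda>x. (- 1 / \<alpha>) * \<phi> x) \<in> subdiff0 T g"
    if "linear \<phi>" "continuous_map T euclideanreal \<phi>" "\<alpha> < 0"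
       "\<forall>x t. g x \<le> ereal t \<longrightarrow> \<phi> x + \<alpha> * t \<le> 0" for \<phi> \<alpha>
  proof (rule mk_sub[OF _ _ _ pr])
    show "linear (\<lambda>x. (- 1 / \<alpha>) * \<phi> x)"
      by (rule linearI) (simp_all add: linear_add[OF that(1)] linear_scale[OF that(1)] algebra_simps)
  next
    show "continuous_map T euclideanreal (\<lambda>x. (- 1 / \<alpha>) * \<phi> x)"
      by (rule continuous_map_real_mult_left[OF that(2)])
  next
    fix x t assume "g x = ereal t"
    then have "\<phi> x + \<alpha> * t \<le> 0" using that(4) by simp
    then show "(- 1 / \<alpha>) * \<phi> x \<le> t" using that(3) by (simp add: field_simps)
  qed
  define u0 where "u0 x = (- 1 / \<alpha>0) * \<phi>0 x" for x
  have u0: "u0 \<in> subdiff0 T g" unfolding u0_def using scaled[OF s0(1,2) a0 s0(4)] .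
  obtain \<phi> \<alpha> where s: "linear \<phi>" "continuous_map T euclideanreal \<phi>" "\<alpha> \<le> 0"
      "\<forall>x t. g x \<le> ereal t \<longrightarrow> \<phi> x + \<alpha> * t \<le> 0" "\<phi> x0 + \<alpha> * r > 0"
    using step[OF r] by blast
  show ?thesis
  proof (cases "\<alpha> < 0")
    case True
    have "(- 1 / \<alpha>) * \<phi> x0 > r" using s(5) True by (simp add: field_simps)
    then show ?thesis using scaled[OF s(1,2) True s(4)] by (intro bexI[of _ "\<lambda>x. (- 1 / \<alpha>) * \<phi> x"]) auto
  next
    case False
    then have a: "\<alpha> = 0" using s(3) by simp
    have px0: "\<phi> x0 > 0" using s(5) a by simp
    define lam where "lam = (\<bar>r - u0 x0\<bar> + 1) / \<phi> x0"
    have lam: "lam \<ge> 0" using px0 lam_def by simp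
    define u where "u x = u0 x + lam * \<phi> x" for x
    have u0p: "linear u0" "continuous_map T euclideanreal u0" "\<And>x. ereal (u0 x) \<le> g x"
      using u0 unfolding subdiff0_def tdual_def by auto
    have "u \<in> subdiff0 T g"
    proof (rule mk_sub[OF _ _ _ pr])
      show "linear u" unfolding u_def
        by (rule linearI) (simp_all add: linear_add[OF s(1)] linear_scale[OF s(1)]
             linear_add[OF u0p(1)] linear_scale[OF u0p(1)] algebra_simps)
    next
      show "continuous_map T euclideanreal u" unfolding u_def
        by (intro continuous_map_add u0p(2) continuous_map_real_mult_left s(2))
    next
      fix x t assume gx: "g x = ereal t"
      then have "\<phi> x + \<alpha> * t \<le> 0" using s(4) by simp
      then have "\<phi> x \<le> 0" using a by simp
      then have "lam * \<phi> x \<le> 0" using lam by (simp add: mult_nonneg_nonpos)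
      moreover have "u0 x \<le> t" using u0p(3)[of x] gx by simp
      ultimately show "u x \<le> t" unfolding u_def by simp
    qed
    moreover have "u x0 > r"
    proof -
      have "lam * \<phi> x0 = \<bar>r - u0 x0\<bar> + 1" using px0 lam_def by simp
      then show ?thesis unfolding u_def by linarith
    qed
    ultimately show ?thesis by blast
  qed
qed



lemma perpD: "x \<in> perp B \<Longrightarrow> b \<in> B \<Longrightarrow> b x = 0" by (simp add: perp_def)

lemma perp_Inter: "B \<noteq> {} \<Longrightarrow> perp B = \<Inter> ((\<lambda>b. {x \<in> UNIV. b x \<in> {0}}) ` B)"
  unfolding perp_def by auto

lemma perp_anti: "A \<subseteq> B \<Longrightarrow> perp B \<subseteq> perp A" unfolding perp_def by blast

lemma perp_diffs:
  assumes "\<And>u. u \<in> D \<Longrightarrow> u x = c"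
  shows "x \<in> perp {(\<lambda>x. a x - b x) | a b. a \<in> D \<and> b \<in> D}"
proof -
  have "\<forall>b'\<in>{(\<lambda>x. a x - b x) | a b. a \<in> D \<and> b \<in> D}. b' x = 0"
  proof
    fix b' assume "b' \<in> {(\<lambda>x. a x - b x) | a b. a \<in> D \<and> b \<in> D}"
    then obtain a b where ab: "b' = (\<lambda>x. a x - b x)" "a \<in> D" "b \<in> D" by blast
    then show "b' x = 0" using assms[OF ab(2)] assms[OF ab(3)] by simp
  qed
  then show ?thesis by (simp add: perp_def)
qed

theorem proposition4:
  fixes T :: "'a::real_vector topology" and g :: "'a \<Rightarrow> ereal"
  assumes "hlcs T" and "\<exists>x::'a. x \<noteq> 0"
    and "g \<in> Gamma T" and "sublinear g"
  shows "(\<forall>xs\<in>tdual T.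
            subspace (Lset g xs) \<and> closedin T (Lset g xs)
          \<and> Lset g xs = {x. g x \<le> ereal (xs x) \<and> g (- x) \<le> ereal (- xs x)}
          \<and> Lset g xs = perp {(\<lambda>x. u x - xs x) | u. u \<in> subdiff0 T g}
          \<and> (\<forall>x. \<forall>u\<in>Lset g xs. g (x + u) = g x + ereal (xs u)))
       \<and> (\<forall>us\<in>subdiff0 T g.
            Lset g us = perp {(\<lambda>x. a x - b x) | a b. a \<in> subdiff0 T g \<and> b \<in> subdiff0 T g})
       \<and> (\<forall>xs\<in>tdual T. \<forall>us\<in>subdiff0 T g. Lset g xs \<subseteq> Lset g us)
       \<and> (\<forall>us\<in>subdiff0 T g. \<forall>vs\<in>subdiff0 T g. Lset g us = Lset g vs)"
proof -
  note T = assms(1) and G = assms(3) and sl = assms(4)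
  have g0: "g 0 = 0" by (rule g_zero[OF T G sl])
  have pr: "proper_fun g" using G unfolding Gamma_def by auto
  have nm: "g x \<noteq> -\<infinity>" for x using pr unfolding proper_fun_def by blast
  have sa: "g (x + y) \<le> g x + g y" for x y using sl unfolding sublinear_def by blast
  define D where "D = subdiff0 T g"
  have Dp: "linear u" "continuous_map T euclideanreal u" "ereal (u x) \<le> g x" if "u \<in> D" for u x
    using that unfolding D_def subdiff0_def tdual_def by auto
  have Dneg: "u (- x) = - u x" if "u \<in> D" for u x using linear_neg[OF Dp(1)[OF that]] .
  define P where "P xs = {(\<lambda>x. u x - xs x) | u. u \<in> D}" for xs :: "'a \<Rightarrow> real"
  have Pmem: "(\<lambda>y. u y - xs y) \<in> P xs" if "u \<in> D" for u xs unfolding P_def using that by blast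
  have Lchar: "Lset g xs = {x. g x \<le> ereal (xs x) \<and> g (- x) \<le> ereal (- xs x)}" for xs
  proof (intro set_eqI iffI)
    fix x assume "x \<in> Lset g xs" then show "x \<in> {x. g x \<le> ereal (xs x) \<and> g (- x) \<le> ereal (- xs x)}"
      unfolding Lset_def by simp
  next
    fix x assume h: "x \<in> {x. g x \<le> ereal (xs x) \<and> g (- x) \<le> ereal (- xs x)}"
    then have h1: "g x \<le> ereal (xs x)" "g (- x) \<le> ereal (- xs x)" by auto
    obtain a where a: "g x = ereal a" using h1(1) nm[of x] by (cases "g x") auto
    obtain b where b: "g (- x) = ereal b" using h1(2) nm[of "- x"] by (cases "g (- x)") auto
    have "g 0 \<le> g x + g (- x)" using sa[of x "- x"] by simp
    then have "0 \<le> a + b" using a b g0 by simp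
    moreover have "a \<le> xs x" "b \<le> - xs x" using h1 a b by auto
    ultimately have "a = xs x" "b = - xs x" by linarith+
    then show "x \<in> Lset g xs" unfolding Lset_def using a b by simp
  qed
  have Lperp: "Lset g xs = perp (P xs)" for xs
  proof (intro set_eqI iffI)
    fix x assume x: "x \<in> Lset g xs"
    have "u x - xs x = 0" if u: "u \<in> D" for u
    proof -
      have "ereal (u x) \<le> ereal (xs x)" using Dp(3)[OF u, of x] x unfolding Lset_def by simp
      moreover have "ereal (u (- x)) \<le> ereal (- xs x)" using Dp(3)[OF u, of "- x"] x unfolding Lset_def by simp
      ultimately show ?thesis using Dneg[OF u, of x] by simp
    qed
    then show "x \<in> perp (P xs)" unfolding perp_def P_def by blast
  next
    fix x assume x: "x \<in> perp (P xs)"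
    have ux: "u x = xs x" if "u \<in> D" for u
    proof -
      have "(\<lambda>y. u y - xs y) x = 0" by (rule perpD[OF x]) (rule Pmem[OF that])
      then show ?thesis by simp
    qed
    have "g x \<le> ereal (xs x)"
    proof (rule ccontr)
      assume "\<not> g x \<le> ereal (xs x)"
      then obtain u where "u \<in> D" "u x > xs x" using sup_rep[OF T G sl, of "xs x" x] D_def by (auto simp: not_le)
      then show False using ux[of u] by simp
    qed
    moreover have "g (- x) \<le> ereal (- xs x)"
    proof (rule ccontr)
      assume "\<not> g (- x) \<le> ereal (- xs x)"
      then obtain u where u: "u \<in> D" "u (- x) > - xs x" using sup_rep[OF T G sl, of "- xs x" "- x"] D_def by (auto simp: not_le)
      then show False using ux[OF u(1)] Dneg[OF u(1)] by simp
    qed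
    ultimately show "x \<in> Lset g xs" using Lchar by blast
  qed
  have partA: "subspace (Lset g xs) \<and> closedin T (Lset g xs)
          \<and> Lset g xs = {x. g x \<le> ereal (xs x) \<and> g (- x) \<le> ereal (- xs x)}
          \<and> Lset g xs = perp {(\<lambda>x. u x - xs x) | u. u \<in> subdiff0 T g}
          \<and> (\<forall>x. \<forall>u\<in>Lset g xs. g (x + u) = g x + ereal (xs u))" if xs: "xs \<in> tdual T" for xs
  proof (intro conjI)
    have xsl: "linear xs" and xsc: "continuous_map T euclideanreal xs" using xs unfolding tdual_def by auto
    have Plin: "linear b" "continuous_map T euclideanreal b" if "b \<in> P xs" for b
    proof -
      have "b \<in> {(\<lambda>x. u x - xs x) | u. u \<in> D}" using that unfolding P_def .
      then obtain u where u: "u \<in> D" "b = (\<lambda>x. u x - xs x)" by blast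
      have ul: "linear u" using Dp(1)[OF u(1)] .
      show "linear b" unfolding u(2)
        by (rule linearI) (simp_all add: linear_add[OF ul] linear_scale[OF ul] linear_add[OF xsl] linear_scale[OF xsl] algebra_simps)
      show "continuous_map T euclideanreal b" unfolding u(2) by (intro continuous_map_diff Dp(2)[OF u(1)] xsc)
    qed
    show "subspace (Lset g xs)" unfolding Lperp subspace_def
    proof (intro conjI ballI allI)
      show "0 \<in> perp (P xs)" unfolding perp_def using Plin(1) linear_0 by blast
    next
      fix x y assume xy: "x \<in> perp (P xs)" "y \<in> perp (P xs)"
      have "b (x + y) = 0" if "b \<in> P xs" for b
        using linear_add[OF Plin(1)[OF that]] perpD[OF xy(1) that] perpD[OF xy(2) that] by simp
      then show "x + y \<in> perp (P xs)" unfolding perp_def by blast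
    next
      fix c x assume xy: "x \<in> perp (P xs)"
      have "b (c *\<^sub>R x) = 0" if "b \<in> P xs" for b
        using linear_scale[OF Plin(1)[OF that]] perpD[OF xy that] by simp
      then show "c *\<^sub>R x \<in> perp (P xs)" unfolding perp_def by blast
    qed
    show "closedin T (Lset g xs)"
    proof (cases "P xs = {}")
      case True
      then have "Lset g xs = topspace T" unfolding Lperp perp_def hlcs_top[OF T] by blast
      then show ?thesis by simp
    next
      case False
      have "Lset g xs = \<Inter> ((\<lambda>b. {x \<in> topspace T. b x \<in> {0}}) ` P xs)"
        unfolding Lperp hlcs_top[OF T] by (rule perp_Inter[OF False])
      also have "closedin T \<dots>"
      proof (rule closedin_Inter)
        show "(\<lambda>b. {x \<in> topspace T. b x \<in> {0}}) ` P xs \<noteq> {}" using False by simp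
      next
        fix K assume "K \<in> (\<lambda>b. {x \<in> topspace T. b x \<in> {0}}) ` P xs"
        then obtain b where b: "b \<in> P xs" "K = {x \<in> topspace T. b x \<in> {0}}" by blast
        show "closedin T K" unfolding b(2)
          by (rule closedin_continuous_map_preimage[OF Plin(2)[OF b(1)]]) simp
      qed
      finally show ?thesis .
    qed
    show "Lset g xs = {x. g x \<le> ereal (xs x) \<and> g (- x) \<le> ereal (- xs x)}" by (rule Lchar)
    have "P xs = {(\<lambda>x. u x - xs x) | u. u \<in> subdiff0 T g}" unfolding P_def D_def ..
    then show "Lset g xs = perp {(\<lambda>x. u x - xs x) | u. u \<in> subdiff0 T g}" using Lperp by metis
    show "\<forall>x. \<forall>u\<in>Lset g xs. g (x + u) = g x + ereal (xs u)"
    proof (intro allI ballI)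
      fix x u assume u: "u \<in> Lset g xs"
      have gu: "g u = ereal (xs u)" "g (- u) = ereal (- xs u)" using u unfolding Lset_def by auto
      have i1: "g (x + u) \<le> g x + ereal (xs u)" using sa[of x u] gu by simp
      have i2: "g x \<le> g (x + u) + ereal (- xs u)" using sa[of "x + u" "- u"] gu by simp
      show "g (x + u) = g x + ereal (xs u)"
      proof (cases "g x")
        case (real a)
        show ?thesis
        proof (cases "g (x + u)")
          case (real b)
          then show ?thesis using i1 i2 \<open>g x = ereal a\<close> by simp
        next
          case PInf
          then show ?thesis using i1 \<open>g x = ereal a\<close> by simp
        next
          case MInf then show ?thesis using nm by blast
        qed
      next
        case PInf
        show ?thesis
        proof (cases "g (x + u)")
          case (real b)
          then show ?thesis using i2 PInf by simp
        next
          case PInf': PInf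
          then show ?thesis using PInf by simp
        next
          case MInf then show ?thesis using nm by blast
        qed
      next
        case MInf then show ?thesis using nm by blast
      qed
    qed
  qed
  have PP: "perp (P us) = perp {(\<lambda>x. a x - b x) | a b. a \<in> D \<and> b \<in> D}" if us: "us \<in> D" for us
  proof (intro set_eqI iffI)
    fix x assume x: "x \<in> perp (P us)"
    have "u x = us x" if "u \<in> D" for u
    proof -
      have "(\<lambda>y. u y - us y) x = 0" by (rule perpD[OF x]) (rule Pmem[OF that])
      then show ?thesis by simp
    qed
    then show "x \<in> perp {(\<lambda>x. a x - b x) | a b. a \<in> D \<and> b \<in> D}" by (rule perp_diffs)
  next
    fix x assume "x \<in> perp {(\<lambda>x. a x - b x) | a b. a \<in> D \<and> b \<in> D}"
    moreover have "P us \<subseteq> {(\<lambda>x. a x - b x) | a b. a \<in> D \<and> b \<in> D}"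
    proof
      fix b' assume "b' \<in> P us"
      then have "b' \<in> {(\<lambda>x. u x - us x) | u. u \<in> D}" unfolding P_def .
      then show "b' \<in> {(\<lambda>x. a x - b x) | a b. a \<in> D \<and> b \<in> D}" using us by blast
    qed
    ultimately show "x \<in> perp (P us)" using perp_anti by blast
  qed
  have partB: "Lset g us = perp {(\<lambda>x. a x - b x) | a b. a \<in> D \<and> b \<in> D}"
    if us: "us \<in> D" for us
    using Lperp[of us] PP[OF us] by (rule trans)
  have partC: "Lset g xs \<subseteq> Lset g us" if "xs \<in> tdual T" "us \<in> D" for xs us
  proof
    fix x assume "x \<in> Lset g xs"
    then have x: "x \<in> perp (P xs)" using Lperp by blast
    have "u x = xs x" if "u \<in> D" for u
    proof -
      have "(\<lambda>y. u y - xs y) x = 0" by (rule perpD[OF x]) (rule Pmem[OF that])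
      then show ?thesis by simp
    qed
    then have "x \<in> perp {(\<lambda>x. a x - b x) | a b. a \<in> D \<and> b \<in> D}" by (rule perp_diffs)
    then show "x \<in> Lset g us" using partB[OF that(2)] by simp
  qed
  have A: "\<forall>xs\<in>tdual T. subspace (Lset g xs) \<and> closedin T (Lset g xs)
          \<and> Lset g xs = {x. g x \<le> ereal (xs x) \<and> g (- x) \<le> ereal (- xs x)}
          \<and> Lset g xs = perp {(\<lambda>x. u x - xs x) | u. u \<in> subdiff0 T g}
          \<and> (\<forall>x. \<forall>u\<in>Lset g xs. g (x + u) = g x + ereal (xs u))"
    by (intro ballI) (rule partA)
  have B: "\<forall>us\<in>subdiff0 T g.
            Lset g us = perp {(\<lambda>x. a x - b x) | a b. a \<in> subdiff0 T g \<and> b \<in> subdiff0 T g}"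
    using partB unfolding D_def by blast
  have C: "\<forall>xs\<in>tdual T. \<forall>us\<in>subdiff0 T g. Lset g xs \<subseteq> Lset g us"
    using partC unfolding D_def by blast
  have E: "\<forall>us\<in>subdiff0 T g. \<forall>vs\<in>subdiff0 T g. Lset g us = Lset g vs"
  proof (intro ballI)
    fix us vs assume "us \<in> subdiff0 T g" "vs \<in> subdiff0 T g"
    then show "Lset g us = Lset g vs" using partB unfolding D_def by simp
  qed
  show ?thesis by (rule conjI[OF A conjI[OF B conjI[OF C E]]])
qed

end
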